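(* Let $k_1,k_2,k_3\ge2$ be integers and $M=S^2(k_1,k_2,k_3)$. For $N_1,N_2,N_3\in\mathbb{Z}_{\ge0}\cup\{\infty\}$ let $\mathcal{G}_{N_1,N_2,N_3}$ be the submodule of $\mathcal{S}(M)$ generated by the elements $S_{l_1}(a_1)S_{l_2}(a_2)S_{l_3}(a_3)$ with $0\le l_i\le N_i$. Then $\mathcal{G}_{k_1,k_2,\infty}=\mathcal{G}_{k_1,k_2,k_3}$.
   Context: $\mathcal{S}(M)$ is the Kauffman bracket skein module of $M$ over $\mathbb{Z}[A^{\pm1}]$. $S^2(k_1,k_2,k_3)$ is the Seifert manifold $\Sigma_{0,0}((k_1,1),(k_2,1),(k_3,1))$. $S_n$ are Chebyshev polynomials of the second kind ($S_0=1,S_1=x,S_{n+1}=xS_n-S_{n-1}$). $a_1,a_2,a_3$ are the three boundary-parallel curves of $\Sigma_{0,3}$, where $\Sigma_{0,3}\times I$ is the genus-two handlebody forming one side of the vertical Heegaard splitting of $M$, pushed into $M$; in $\mathcal{S}(M)$ these satisfy the relations that, in the symbol notation $s_i^n=S_n(a_i)$ (with $s_i^{-1}=0$, $s_i^n=-s_i^{-n-2}$ for $n\le-2$), the elements $R_{13}(n_1,n_2,n_3)-R_{13}(-n_1+k_1,n_2,-n_3+k_3)$ and $R_{23}(n_1,n_2,n_3)-R_{23}(n_1,-n_2+k_2,-n_3+k_3)$ vanish for all $n_i\in\mathbb{Z}$, where $R_{13}(n_1,n_2,n_3)=-A^{-n_1-n_3-2}s_1^{n_1}s_2^{n_2}s_3^{n_3}-A^{-n_1-n_3+2}s_1^{n_1-2}s_2^{n_2}s_3^{n_3-2}-A^{-n_1-n_3}s_1^{n_1-1}s_2^{n_2+1}s_3^{n_3-1}-A^{-n_1-n_3}s_1^{n_1-1}s_2^{n_2-1}s_3^{n_3-1}$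 and $R_{23}(n_1,n_2,n_3)=-A^{-n_2-n_3-2}s_1^{n_1}s_2^{n_2}s_3^{n_3}-A^{-n_2-n_3+2}s_1^{n_1}s_2^{n_2-2}s_3^{n_3-2}-A^{-n_2-n_3}s_1^{n_1+1}s_2^{n_2-1}s_3^{n_3-1}-A^{-n_2-n_3}s_1^{n_1-1}s_2^{n_2-1}s_3^{n_3-1}$ (and these generate all relations among the $S_{l_1}(a_1)S_{l_2}(a_2)S_{l_3}(a_3)$, which span $\mathcal{S}(M)$). *)

theory Defs
  imports Main "HOL-Library.Extended_Nat" "HOL-Library.Function_Algebras"
begin

text \<open>The free Z[A,A^-1]-module on the monomials S_l1(a1) S_l2(a2) S_l3(a3), l_i >= 0,
  viewed as a free Z-module with basis A^j * S_l1(a1) S_l2(a2) S_l3(a3), j in Z.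
  Elements are integer-valued functions on (j,l1,l2,l3) (finite support is automatic
  for everything generated below).\<close>

type_synonym elem = "int \<times> nat \<times> nat \<times> nat \<Rightarrow> int"

inductive_set zspan :: "elem set \<Rightarrow> elem set" for S :: "elem set" where
  zspan_zero: "0 \<in> zspan S"
| zspan_gen: "x \<in> S \<Longrightarrow> x \<in> zspan S"
| zspan_add: "x \<in> zspan S \<Longrightarrow> y \<in> zspan S \<Longrightarrow> x + y \<in> zspan S"
| zspan_neg: "x \<in> zspan S \<Longrightarrow> - x \<in> zspan S"

text \<open>Symbol convention: s^n = S_n(a) for n >= 0, s^(-1) = 0, s^n = - s^(-n-2) for n <= -2.
  Returns (sign, index).\<close>
definition symb :: "int \<Rightarrow> int \<times> nat" where
  "symb n = (if n \<ge> 0 then (1, nat n) else if n = -1 then (0, 0) else (-1, nat (-n-2)))"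

text \<open>The element A^j s_1^n1 s_2^n2 s_3^n3.\<close>
definition mon :: "int \<Rightarrow> int \<Rightarrow> int \<Rightarrow> int \<Rightarrow> elem" where
  "mon j n1 n2 n3 = (\<lambda>x. if x = (j, snd (symb n1), snd (symb n2), snd (symb n3))
                         then fst (symb n1) * fst (symb n2) * fst (symb n3) else 0)"

definition shiftA :: "int \<Rightarrow> elem \<Rightarrow> elem" where
  "shiftA j f = (\<lambda>(i, l). f (i - j, l))"

definition R13 :: "int \<Rightarrow> int \<Rightarrow> int \<Rightarrow> elem" where
  "R13 n1 n2 n3 =
     - mon (-n1-n3-2) n1 n2 n3
     - mon (-n1-n3+2) (n1-2) n2 (n3-2)
     - mon (-n1-n3) (n1-1) (n2+1) (n3-1)
     - mon (-n1-n3) (n1-1) (n2-1) (n3-1)"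

definition R23 :: "int \<Rightarrow> int \<Rightarrow> int \<Rightarrow> elem" where
  "R23 n1 n2 n3 =
     - mon (-n2-n3-2) n1 n2 n3
     - mon (-n2-n3+2) n1 (n2-2) (n3-2)
     - mon (-n2-n3) (n1+1) (n2-1) (n3-1)
     - mon (-n2-n3) (n1-1) (n2-1) (n3-1)"

text \<open>Z-generators of the relation submodule (Z[A^{+-1}]-span of the relations).\<close>
definition relgens :: "nat \<Rightarrow> nat \<Rightarrow> nat \<Rightarrow> elem set" where
  "relgens k1 k2 k3 =
     {shiftA j (R13 n1 n2 n3 - R13 (-n1 + int k1) n2 (-n3 + int k3)) | j n1 n2 n3. True}
   \<union> {shiftA j (R23 n1 n2 n3 - R23 n1 (-n2 + int k2) (-n3 + int k3)) | j n1 n2 n3. True}"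

text \<open>S(S^2(k1,k2,k3)) = free module / zspan (relgens k1 k2 k3).\<close>

definition basis_el :: "int \<Rightarrow> nat \<Rightarrow> nat \<Rightarrow> nat \<Rightarrow> elem" where
  "basis_el j l1 l2 l3 = (\<lambda>x. if x = (j, l1, l2, l3) then 1 else 0)"

text \<open>Preimage in the free module of the submodule G_{N1,N2,N3} of the skein module.\<close>
definition Gsub :: "nat \<Rightarrow> nat \<Rightarrow> nat \<Rightarrow> enat \<Rightarrow> enat \<Rightarrow> enat \<Rightarrow> elem set" where
  "Gsub k1 k2 k3 N1 N2 N3 =
     {x. \<exists>y \<in> zspan {basis_el j l1 l2 l3 | j l1 l2 l3.
                       enat l1 \<le> N1 \<and> enat l2 \<le> N2 \<and> enat l3 \<le> N3}.
         x - y \<in> zspan (relgens k1 k2 k3)}"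

end

theory Submission
  imports Defs
begin

lemma zspan_mono: "x \<in> zspan S \<Longrightarrow> S \<subseteq> T \<Longrightarrow> x \<in> zspan T"
  by (induction rule: zspan.induct) (auto intro: zspan.intros)

lemma zspan_diff: "x \<in> zspan S \<Longrightarrow> y \<in> zspan S \<Longrightarrow> x - y \<in> zspan S"
  using zspan_add[OF _ zspan_neg] by (metis diff_conv_add_uminus)

lemma Gsub_add:
  assumes "x \<in> Gsub k1 k2 k3 N1 N2 N3" "y \<in> Gsub k1 k2 k3 N1 N2 N3"
  shows "x + y \<in> Gsub k1 k2 k3 N1 N2 N3"
proof -
  from assms obtain x1 y1 where
    "x1 \<in> zspan {basis_el j l1 l2 l3 | j l1 l2 l3. enat l1 \<le> N1 \<and> enat l2 \<le> N2 \<and> enat l3 \<le> N3}"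
    "x - x1 \<in> zspan (relgens k1 k2 k3)"
    "y1 \<in> zspan {basis_el j l1 l2 l3 | j l1 l2 l3. enat l1 \<le> N1 \<and> enat l2 \<le> N2 \<and> enat l3 \<le> N3}"
    "y - y1 \<in> zspan (relgens k1 k2 k3)"
    unfolding Gsub_def by blast
  moreover have "x + y - (x1 + y1) = (x - x1) + (y - y1)" by (simp add: algebra_simps)
  ultimately show ?thesis unfolding Gsub_def
    by (metis (mono_tags, lifting) mem_Collect_eq zspan_add)
qed

lemma Gsub_neg:
  assumes "x \<in> Gsub k1 k2 k3 N1 N2 N3"
  shows "- x \<in> Gsub k1 k2 k3 N1 N2 N3"
proof -
  from assms obtain x1 where
    "x1 \<in> zspan {basis_el j l1 l2 l3 | j l1 l2 l3. enat l1 \<le> N1 \<and> enat l2 \<le> N2 \<and> enat l3 \<le> N3}"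
    "x - x1 \<in> zspan (relgens k1 k2 k3)"
    unfolding Gsub_def by blast
  moreover have "- x - (- x1) = - (x - x1)" by (simp add: algebra_simps)
  ultimately show ?thesis unfolding Gsub_def
    by (metis (mono_tags, lifting) mem_Collect_eq zspan_neg)
qed

lemma Gsub_diff:
  "x \<in> Gsub k1 k2 k3 N1 N2 N3 \<Longrightarrow> y \<in> Gsub k1 k2 k3 N1 N2 N3 \<Longrightarrow> x - y \<in> Gsub k1 k2 k3 N1 N2 N3"
  by (metis Gsub_add Gsub_neg diff_conv_add_uminus)

lemma Gsub_rel: "x \<in> zspan (relgens k1 k2 k3) \<Longrightarrow> x \<in> Gsub k1 k2 k3 N1 N2 N3"
  unfolding Gsub_def by (force intro: zspan_zero)

lemma Gsub_zero: "0 \<in> Gsub k1 k2 k3 N1 N2 N3"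
  by (rule Gsub_rel) (rule zspan_zero)

lemma Gsub_basis: "enat l1 \<le> N1 \<Longrightarrow> enat l2 \<le> N2 \<Longrightarrow> enat l3 \<le> N3 \<Longrightarrow>
   basis_el j l1 l2 l3 \<in> Gsub k1 k2 k3 N1 N2 N3"
  unfolding Gsub_def
  apply clarsimp
  apply (rule bexI[of _ "basis_el j l1 l2 l3"])
   apply (simp add: zspan_zero)
  apply (rule zspan_gen) by blast

lemma Gsub_mono: "N3 \<le> N3' \<Longrightarrow> Gsub k1 k2 k3 N1 N2 N3 \<subseteq> Gsub k1 k2 k3 N1 N2 N3'"
  unfolding Gsub_def
  apply clarsimp
  subgoal for x y
    apply (rule bexI[of _ y], simp)
    apply (erule zspan_mono)
    using order_trans by blast
  done

lemma shiftA_mon: "shiftA t (mon i a b c) = mon (i + t) a b c"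
  unfolding shiftA_def mon_def by (auto simp: fun_eq_iff)

lemma shiftA_diff: "shiftA t (f - g) = shiftA t f - shiftA t g"
  unfolding shiftA_def by (auto simp: fun_eq_iff)

lemma shiftA_uminus: "shiftA t (- f) = - shiftA t f"
  unfolding shiftA_def by (auto simp: fun_eq_iff)

lemma mon_basis: "mon j (int a) (int b) (int c) = basis_el j a b c"
  unfolding mon_def basis_el_def symb_def by (auto simp: fun_eq_iff)

lemma mon_cases:
  "fst (symb n1) * fst (symb n2) * fst (symb n3) = 0 \<and> mon j n1 n2 n3 = 0
   \<or> mon j n1 n2 n3 = basis_el j (snd (symb n1)) (snd (symb n2)) (snd (symb n3))
   \<or> mon j n1 n2 n3 = - basis_el j (snd (symb n1)) (snd (symb n2)) (snd (symb n3))"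
  unfolding mon_def basis_el_def symb_def by (auto simp: fun_eq_iff)

lemma mon_G:
  assumes "fst (symb n1) * fst (symb n2) * fst (symb n3) = 0 \<or>
    basis_el j (snd (symb n1)) (snd (symb n2)) (snd (symb n3)) \<in> Gsub k1 k2 k3 N1 N2 N3"
  shows "mon j n1 n2 n3 \<in> Gsub k1 k2 k3 N1 N2 N3"
proof (cases "fst (symb n1) * fst (symb n2) * fst (symb n3) = 0")
  case True
  then have "mon j n1 n2 n3 = 0" unfolding mon_def by (auto simp: fun_eq_iff)
  then show ?thesis by (simp add: Gsub_zero)
next
  case False
  then show ?thesis using mon_cases[of n1 n2 n3 j] assms by (metis Gsub_neg)
qed

lemma lin:
  fixes a b c d e f g h r :: elem
  assumes "r \<in> G" "b \<in> G" "c \<in> G" "d \<in> G" "e \<in> G" "f \<in> G" "g \<in> G" "h \<in> G"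
    and "r = - a - b - c - d - (- e - f - g - h)"
    and "G = Gsub k1 k2 k3 N1 N2 N3"
  shows "a \<in> G"
proof -
  have "a = - r - b - c - d + e + f + g + h" using assms(9) by (simp add: algebra_simps)
  then show ?thesis using assms by (metis Gsub_add Gsub_diff Gsub_neg)
qed


lemma main:
  assumes k1: "k1 \<ge> 2" and k2: "k2 \<ge> 2" and k3: "k3 \<ge> 2"
  shows "l1 \<le> k1 \<Longrightarrow> l2 \<le> k2 \<Longrightarrow>
    basis_el j l1 l2 l3 \<in> Gsub k1 k2 k3 (enat k1) (enat k2) (enat k3)"
proof (induction l3 arbitrary: j l1 l2 rule: less_induct)
  case (less l3)
  define G where "G = Gsub k1 k2 k3 (enat k1) (enat k2) (enat k3)"
  have base: "\<And>m j a b. m \<le> k3 \<Longrightarrow> a \<le> k1 \<Longrightarrow> b \<le> k2 \<Longrightarrow> basis_el j a b m \<in> G"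
    unfolding G_def by (rule Gsub_basis) auto
  have M: "\<And>j n1 n2 n3. fst (symb n1) * fst (symb n2) * fst (symb n3) = 0 \<or>
     (snd (symb n1) \<le> k1 \<and> snd (symb n2) \<le> k2 \<and> (snd (symb n3) < l3 \<or> snd (symb n3) \<le> k3))
     \<Longrightarrow> mon j n1 n2 n3 \<in> G"
    unfolding G_def using less.IH base[unfolded G_def] by (metis mon_G)
  have rel13: "\<And>t n1 n2 n3. shiftA t (R13 n1 n2 n3 - R13 (-n1 + int k1) n2 (-n3 + int k3)) \<in> G"
    unfolding G_def by (rule Gsub_rel, rule zspan_gen) (unfold relgens_def, blast)
  have rel23: "\<And>t n1 n2 n3. shiftA t (R23 n1 n2 n3 - R23 n1 (-n2 + int k2) (-n3 + int k3)) \<in> G"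
    unfolding G_def by (rule Gsub_rel, rule zspan_gen) (unfold relgens_def, blast)
  show ?case
  proof (cases "l3 \<le> k3")
    case True
    then show ?thesis using base less.prems unfolding G_def by blast
  next
    case False
    have A: "basis_el j l1 l2 l3 \<in> G" if hl1: "l1 \<le> k1" and hl2: "l2 < k2" for j l1 l2
    proof -
      define a where "a = int l1"
      define b where "b = int l2"
      define c where "c = int l3"
      define a' where "a' = - a + int k1"
      define c' where "c' = - c + int k3"
      define t where "t = j + a + c + 2"
      have r: "shiftA t (R13 a b c - R13 a' b c') \<in> G" unfolding a'_def c'_def by (rule rel13)
      have eq: "shiftA t (R13 a b c - R13 a' b c') =
        - mon (-a-c-2+t) a b c - mon (-a-c+2+t) (a-2) b (c-2) - mon (-a-c+t) (a-1) (b+1) (c-1)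
        - mon (-a-c+t) (a-1) (b-1) (c-1)
        - (- mon (-a'-c'-2+t) a' b c' - mon (-a'-c'+2+t) (a'-2) b (c'-2)
           - mon (-a'-c'+t) (a'-1) (b+1) (c'-1) - mon (-a'-c'+t) (a'-1) (b-1) (c'-1))"
        by (simp only: R13_def shiftA_diff shiftA_uminus shiftA_mon)
      have "mon (-a-c-2+t) a b c \<in> G"
        apply (rule lin[OF r _ _ _ _ _ _ _ eq G_def])
        using hl1 hl2 False k1 k2 k3
        by (auto intro!: M simp: symb_def a_def b_def c_def a'_def c'_def)
      moreover have "-a-c-2+t = j" unfolding t_def by simp
      ultimately show ?thesis unfolding a_def b_def c_def by (simp add: mon_basis)
    qed
    have B: "basis_el j l1 l2 l3 \<in> G" if hl1: "l1 < k1" and hl2: "l2 \<le> k2" for j l1 l2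
    proof -
      define a where "a = int l1"
      define b where "b = int l2"
      define c where "c = int l3"
      define b' where "b' = - b + int k2"
      define c' where "c' = - c + int k3"
      define t where "t = j + b + c + 2"
      have r: "shiftA t (R23 a b c - R23 a b' c') \<in> G" unfolding b'_def c'_def by (rule rel23)
      have eq: "shiftA t (R23 a b c - R23 a b' c') =
        - mon (-b-c-2+t) a b c - mon (-b-c+2+t) a (b-2) (c-2) - mon (-b-c+t) (a+1) (b-1) (c-1)
        - mon (-b-c+t) (a-1) (b-1) (c-1)
        - (- mon (-b'-c'-2+t) a b' c' - mon (-b'-c'+2+t) a (b'-2) (c'-2)
           - mon (-b'-c'+t) (a+1) (b'-1) (c'-1) - mon (-b'-c'+t) (a-1) (b'-1) (c'-1))"
        by (simp only: R23_def shiftA_diff shiftA_uminus shiftA_mon)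
      have "mon (-b-c-2+t) a b c \<in> G"
        apply (rule lin[OF r _ _ _ _ _ _ _ eq G_def])
        using hl1 hl2 False k1 k2 k3
        by (auto intro!: M simp: symb_def a_def b_def c_def b'_def c'_def)
      moreover have "-b-c-2+t = j" unfolding t_def by simp
      ultimately show ?thesis unfolding a_def b_def c_def by (simp add: mon_basis)
    qed
    have C: "mon j (int k1 - 1) (int k2 + 1) (int l3 - 1) \<in> G" for j
    proof -
      define a where "a = int k1 - 1"
      define b where "b = int k2 + 1"
      define c where "c = int l3 - 1"
      define b' where "b' = - b + int k2"
      define c' where "c' = - c + int k3"
      define t where "t = j + b + c + 2"
      have r: "shiftA t (R23 a b c - R23 a b' c') \<in> G" unfolding b'_def c'_def by (rule rel23)
      have eq: "shiftA t (R23 a b c - R23 a b' c') =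
        - mon (-b-c-2+t) a b c - mon (-b-c+2+t) a (b-2) (c-2) - mon (-b-c+t) (a+1) (b-1) (c-1)
        - mon (-b-c+t) (a-1) (b-1) (c-1)
        - (- mon (-b'-c'-2+t) a b' c' - mon (-b'-c'+2+t) a (b'-2) (c'-2)
           - mon (-b'-c'+t) (a+1) (b'-1) (c'-1) - mon (-b'-c'+t) (a-1) (b'-1) (c'-1))"
        by (simp only: R23_def shiftA_diff shiftA_uminus shiftA_mon)
      have "mon (-b-c-2+t) a b c \<in> G"
        apply (rule lin[OF r _ _ _ _ _ _ _ eq G_def])
        using False k1 k2 k3
        by (auto intro!: M simp: symb_def a_def b_def c_def b'_def c'_def)
      moreover have "-b-c-2+t = j" unfolding t_def by simp
      ultimately show ?thesis unfolding a_def b_def c_def by simp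
    qed
    have D: "basis_el j k1 k2 l3 \<in> G" for j
    proof -
      define a where "a = int k1"
      define b where "b = int k2"
      define c where "c = int l3"
      define a' where "a' = - a + int k1"
      define c' where "c' = - c + int k3"
      define t where "t = j + a + c + 2"
      have r: "shiftA t (R13 a b c - R13 a' b c') \<in> G" unfolding a'_def c'_def by (rule rel13)
      have eq: "shiftA t (R13 a b c - R13 a' b c') =
        - mon (-a-c-2+t) a b c - mon (-a-c+2+t) (a-2) b (c-2) - mon (-a-c+t) (a-1) (b+1) (c-1)
        - mon (-a-c+t) (a-1) (b-1) (c-1)
        - (- mon (-a'-c'-2+t) a' b c' - mon (-a'-c'+2+t) (a'-2) b (c'-2)
           - mon (-a'-c'+t) (a'-1) (b+1) (c'-1) - mon (-a'-c'+t) (a'-1) (b-1) (c'-1))"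
        by (simp only: R13_def shiftA_diff shiftA_uminus shiftA_mon)
      have Ct: "mon (-a-c+t) (a-1) (b+1) (c-1) \<in> G" unfolding a_def b_def c_def by (rule C)
      have "mon (-a-c-2+t) a b c \<in> G"
        apply (rule lin[OF r _ Ct _ _ _ _ _ eq G_def])
        using False k1 k2 k3
        by (auto intro!: M simp: symb_def a_def b_def c_def a'_def c'_def)
      moreover have "-a-c-2+t = j" unfolding t_def by simp
      ultimately show ?thesis unfolding a_def b_def c_def by (simp add: mon_basis)
    qed
    show ?thesis
    proof (cases "l2 < k2")
      case True
      then show ?thesis using A less.prems unfolding G_def by blast
    next
      case False2: False
      show ?thesis
      proof (cases "l1 < k1")
        case True
        then show ?thesis using B less.prems unfolding G_def by blast
      next
        case False
        then have "l1 = k1" "l2 = k2" using False2 less.prems by auto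
        then show ?thesis using D unfolding G_def by blast
      qed
    qed
  qed
qed


theorem lemma5p1:
  fixes k1 k2 k3 :: nat
  assumes "k1 \<ge> 2" and "k2 \<ge> 2" and "k3 \<ge> 2"
  shows "Gsub k1 k2 k3 (enat k1) (enat k2) \<infinity> = Gsub k1 k2 k3 (enat k1) (enat k2) (enat k3)"
proof
  show "Gsub k1 k2 k3 (enat k1) (enat k2) (enat k3) \<subseteq> Gsub k1 k2 k3 (enat k1) (enat k2) \<infinity>"
    by (rule Gsub_mono) simp
next
  show "Gsub k1 k2 k3 (enat k1) (enat k2) \<infinity> \<subseteq> Gsub k1 k2 k3 (enat k1) (enat k2) (enat k3)"
  proof
    fix x assume "x \<in> Gsub k1 k2 k3 (enat k1) (enat k2) \<infinity>"
    then obtain y where y: "y \<in> zspan {basis_el j l1 l2 l3 | j l1 l2 l3.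
        enat l1 \<le> enat k1 \<and> enat l2 \<le> enat k2 \<and> enat l3 \<le> \<infinity>}"
      and xy: "x - y \<in> zspan (relgens k1 k2 k3)"
      unfolding Gsub_def by blast
    from y have "y \<in> Gsub k1 k2 k3 (enat k1) (enat k2) (enat k3)"
    proof (induction rule: zspan.induct)
      case zspan_zero then show ?case by (rule Gsub_zero)
    next
      case (zspan_gen x) then show ?case using main[OF assms] by auto
    next
      case (zspan_add x y) then show ?case using Gsub_add by blast
    next
      case (zspan_neg x) then show ?case using Gsub_neg by blast
    qed
    moreover have "x - y \<in> Gsub k1 k2 k3 (enat k1) (enat k2) (enat k3)" using xy by (rule Gsub_rel)
    ultimately have "(x - y) + y \<in> Gsub k1 k2 k3 (enat k1) (enat k2) (enat k3)" by (metis Gsub_add)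
    then show "x \<in> Gsub k1 k2 k3 (enat k1) (enat k2) (enat k3)" by simp
  qed
qed

end
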